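(* Let $N\ge 3$ and let $G$ be the graph on vertices $\{u_{1j},b_{1j},u_{2j}: j\in[N]\}$ whose fractional stable set polytope $QSTAB(G)\subseteq\mathbb R^{3N}$ is given by: $u_{1j},b_{1j},u_{2j}\ge0$ for $j\in[N]$; $b_{1j}+\sum_{k=1}^N u_{1k}\le1$ for $j\in[N]$; $\sum_{j=1}^N u_{2j}\le1$; $u_{1j}+u_{2j}+b_{1j}\le1$ for $j\in[N]$. Let $O=[N]$. For every $U\subseteq O$ with $2\le|U|\le N-1$, every $m\in O\setminus U$ and every $V$ with $U\subseteq V\subseteq O$, the vector $\mathbf v(m,U,V)$ with $u_{1m}=|U|^{-1}$, $b_{1j}=1-|U|^{-1}$ for $j\in V$, $u_{2j}=|U|^{-1}$ for $j\in U$, and all other coordinates $0$, is an extreme point of $QSTAB(G)$.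
   Context: $G$ is the enhanced conflict graph of a $2\times N$ switch whose traffic consists of unicasts from input 1 to each output $j$ ($u_{1j}$), a broadcast from input 1 to all outputs (subflows $b_{1j}$), and unicasts from input 2 to each output $j$ ($u_{2j}$); its edges are: $u_{1j}\sim u_{1k}$ and $u_{2j}\sim u_{2k}$ for $j\ne k$; $b_{1j}\sim u_{1k}$ for all $j,k$; and $u_{1j}\sim u_{2j}$, $u_{2j}\sim b_{1j}$ for all $j$. $QSTAB(G)$ is the set of nonnegative vectors satisfying all clique inequalities, which for this graph are the inequalities listed. *)

theory Defs
  imports Main "HOL-Library.Function_Algebras" Complex_Main
begin

text \<open>Coordinates of R^{3N}: kinds u1, b1, u2, each indexed by j in {1..N}.
A point is a function kind => nat => real that vanishes outside j in {1..N}.\<close>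

datatype kind = U1 | B1 | U2

definition QSTAB :: "nat \<Rightarrow> (kind \<Rightarrow> nat \<Rightarrow> real) set" where
  "QSTAB N = {x.
     (\<forall>k j. j \<notin> {1..N} \<longrightarrow> x k j = 0) \<and>
     (\<forall>j\<in>{1..N}. x U1 j \<ge> 0 \<and> x B1 j \<ge> 0 \<and> x U2 j \<ge> 0) \<and>
     (\<forall>j\<in>{1..N}. x B1 j + (\<Sum>k=1..N. x U1 k) \<le> 1) \<and>
     (\<Sum>j=1..N. x U2 j) \<le> 1 \<and>
     (\<forall>j\<in>{1..N}. x U1 j + x U2 j + x B1 j \<le> 1)}"

definition is_extreme_point :: "(kind \<Rightarrow> nat \<Rightarrow> real) set \<Rightarrow> (kind \<Rightarrow> nat \<Rightarrow> real) \<Rightarrow> bool" where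
  "is_extreme_point P x \<longleftrightarrow> x \<in> P \<and>
     (\<forall>y\<in>P. \<forall>z\<in>P. \<forall>t::real. 0 < t \<and> t < 1 \<and>
        x = (\<lambda>k j. t * y k j + (1 - t) * z k j) \<longrightarrow> y = z)"

definition vvec :: "nat \<Rightarrow> nat set \<Rightarrow> nat set \<Rightarrow> kind \<Rightarrow> nat \<Rightarrow> real" where
  "vvec m U V = (\<lambda>k j. case k of
      U1 \<Rightarrow> (if j = m then 1 / real (card U) else 0)
    | B1 \<Rightarrow> (if j \<in> V then 1 - 1 / real (card U) else 0)
    | U2 \<Rightarrow> (if j \<in> U then 1 / real (card U) else 0))"

end

theory Submission
  imports Defs
begin

lemma zero_lem: "0 \<le> (p::real) \<Longrightarrow> 0 \<le> q \<Longrightarrow> 0 < t \<Longrightarrow> t < 1 \<Longrightarrow> t*p+(1-t)*q = 0 \<Longrightarrow> p = 0"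
proof -
  assume a: "0 \<le> (p::real)" "0 \<le> q" "0 < t" "t < 1" "t*p+(1-t)*q = 0"
  have "t*p \<ge> 0" "(1-t)*q \<ge> 0" using a by simp_all
  hence "t*p = 0" using a by linarith
  thus ?thesis using a by simp
qed

lemma one_lem: "(p::real) \<le> 1 \<Longrightarrow> q \<le> 1 \<Longrightarrow> 0 < t \<Longrightarrow> t < 1 \<Longrightarrow> t*p+(1-t)*q = 1 \<Longrightarrow> p = 1"
proof -
  assume a: "(p::real) \<le> 1" "q \<le> 1" "0 < t" "t < 1" "t*p+(1-t)*q = 1"
  have "t*p \<le> t" "(1-t)*q \<le> 1-t" using a by (simp_all add: mult_left_le)
  hence "t*p = t" using a by linarith
  thus ?thesis using a by simp
qed

lemma key:
  fixes N m :: nat and U V :: "nat set"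
  assumes U: "U \<subseteq> {1..N}" and cU: "2 \<le> card U"
    and m: "m \<in> {1..N} - U"
    and UV: "U \<subseteq> V" and V: "V \<subseteq> {1..N}"
    and y: "y \<in> QSTAB N" and z: "z \<in> QSTAB N" and t: "0 < t" "t < 1"
    and eq: "vvec m U V = (\<lambda>k j. t * y k j + (1 - t) * z k j)"
  shows "y = vvec m U V"
proof -
  define a where "a = 1 / real (card U)"
  have finU: "finite U" using U finite_subset by blast
  have ca: "real (card U) * a = 1" using cU unfolding a_def by simp
  have hx: "\<And>k j. vvec m U V k j = t * y k j + (1 - t) * z k j" using eq by metis
  note yq = y[unfolded QSTAB_def, simplified] and zq = z[unfolded QSTAB_def, simplified]
  have y0: "\<And>k j. j \<notin> {1..N} \<Longrightarrow> y k j = 0" using y unfolding QSTAB_def by blast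
  have ynn: "\<And>k j. j \<in> {1..N} \<Longrightarrow> y k j \<ge> 0"
  proof -
    fix k j assume "j \<in> {1..N}" thus "y k j \<ge> 0" using y unfolding QSTAB_def by (cases k) auto
  qed
  have znn: "\<And>k j. j \<in> {1..N} \<Longrightarrow> z k j \<ge> 0"
  proof -
    fix k j assume "j \<in> {1..N}" thus "z k j \<ge> 0" using z unfolding QSTAB_def by (cases k) auto
  qed
  have zer: "y k j = 0" if "j \<in> {1..N}" "vvec m U V k j = 0" for k j
    using zero_lem[OF ynn[OF that(1)] znn[OF that(1)] t] that hx[of k j] by simp
  have yU1: "y U1 j = 0" if "j \<noteq> m" for j
    using zer[of j U1] y0[of j U1] that by (cases "j \<in> {1..N}") (auto simp: vvec_def)
  have yB1: "y B1 j = 0" if "j \<notin> V" for j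
    using zer[of j B1] y0[of j B1] that by (cases "j \<in> {1..N}") (auto simp: vvec_def)
  have yU2: "y U2 j = 0" if "j \<notin> U" for j
    using zer[of j U2] y0[of j U2] that by (cases "j \<in> {1..N}") (auto simp: vvec_def)
  define p where "p = y U1 m"
  have sU1: "(\<Sum>k=1..N. y U1 k) = p"
  proof -
    have "(\<Sum>k=1..N. y U1 k) = (\<Sum>k=1..N. if k = m then p else 0)"
      by (rule sum.cong) (auto simp: p_def yU1)
    also have "\<dots> = p" using m by simp
    finally show ?thesis .
  qed
  have xU1: "(\<Sum>k=1..N. vvec m U V U1 k) = a" using m by (simp add: vvec_def a_def)
  have xU2: "(\<Sum>k=1..N. vvec m U V U2 k) = 1"
  proof -
    have "(\<Sum>k=1..N. vvec m U V U2 k) = (\<Sum>k\<in>{1..N}\<inter>U. a)"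
      unfolding sum.inter_restrict[OF finite_atLeastAtMost] by (rule sum.cong) (auto simp: vvec_def a_def)
    also have "\<dots> = real (card U) * a" using U by (simp add: Int_absorb1)
    finally show ?thesis using ca by simp
  qed
  have lin: "(\<Sum>k=1..N. vvec m U V kk k) = t * (\<Sum>k=1..N. y kk k) + (1-t) * (\<Sum>k=1..N. z kk k)" for kk
    by (simp add: hx sum.distrib sum_distrib_left)
  have B1: "y B1 j = 1 - p" if j: "j \<in> V" for j
  proof -
    have jN: "j \<in> {1..N}" using j V by blast
    have "y B1 j + (\<Sum>k=1..N. y U1 k) \<le> 1" "z B1 j + (\<Sum>k=1..N. z U1 k) \<le> 1"
      using y z jN unfolding QSTAB_def by blast+
    moreover have "t * (y B1 j + (\<Sum>k=1..N. y U1 k)) + (1-t) * (z B1 j + (\<Sum>k=1..N. z U1 k)) = 1"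
    proof -
      have "vvec m U V B1 j + (\<Sum>k=1..N. vvec m U V U1 k) = 1" using xU1 j by (simp add: vvec_def a_def)
      thus ?thesis using lin[of U1] hx[of B1 j] by (simp add: algebra_simps)
    qed
    ultimately have "y B1 j + (\<Sum>k=1..N. y U1 k) = 1" using one_lem t by blast
    thus ?thesis using sU1 by simp
  qed
  have U2: "y U2 j = p" if j: "j \<in> U" for j
  proof -
    have jN: "j \<in> {1..N}" using j U by blast
    have "y U1 j + y U2 j + y B1 j \<le> 1" "z U1 j + z U2 j + z B1 j \<le> 1"
      using y z jN unfolding QSTAB_def by blast+
    moreover have "t * (y U1 j + y U2 j + y B1 j) + (1-t) * (z U1 j + z U2 j + z B1 j) = 1"
    proof -
      have "vvec m U V U1 j + vvec m U V U2 j + vvec m U V B1 j = 1" using j m UV by (auto simp: vvec_def a_def)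
      thus ?thesis using hx[of U1 j] hx[of U2 j] hx[of B1 j] by (simp add: algebra_simps)
    qed
    ultimately have "y U1 j + y U2 j + y B1 j = 1" using one_lem t by blast
    moreover have "y U1 j = 0" using yU1 j m by (metis DiffE)
    ultimately show ?thesis using B1[of j] j UV by auto
  qed
  have s2: "(\<Sum>k=1..N. y U2 k) = 1"
  proof -
    have "(\<Sum>k=1..N. y U2 k) \<le> 1" "(\<Sum>k=1..N. z U2 k) \<le> 1"
      using y z unfolding QSTAB_def by blast+
    moreover have "t * (\<Sum>k=1..N. y U2 k) + (1-t) * (\<Sum>k=1..N. z U2 k) = 1"
      using lin[of U2] xU2 by simp
    ultimately show ?thesis using one_lem t by blast
  qed
  have "(\<Sum>k=1..N. y U2 k) = (\<Sum>k\<in>{1..N}. if k \<in> U then p else 0)"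
    by (rule sum.cong) (auto simp: U2 yU2)
  also have "\<dots> = (\<Sum>k\<in>{1..N}\<inter>U. p)" unfolding sum.inter_restrict[OF finite_atLeastAtMost] by simp
  also have "\<dots> = real (card U) * p" using U by (simp add: Int_absorb1)
  finally have "real (card U) * p = 1" using s2 by simp
  hence pa: "p = a" unfolding a_def using cU by (simp add: field_simps)
  show ?thesis
  proof (intro ext)
    fix k j
    show "y k j = vvec m U V k j"
    proof (cases "j \<in> {1..N}")
      case False
      thus ?thesis using y0 m U V by (cases k) (auto simp: vvec_def)
    next
      case True
      thus ?thesis using yU1 yB1 yU2 B1 U2 pa p_def by (cases k) (auto simp: vvec_def a_def)
    qed
  qed
qed

theorem theorem10:
  fixes N m :: nat and U V :: "nat set"
  assumes "N \<ge> 3"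
    and "U \<subseteq> {1..N}" and "2 \<le> card U" and "card U \<le> N - 1"
    and "m \<in> {1..N} - U"
    and "U \<subseteq> V" and "V \<subseteq> {1..N}"
  shows "is_extreme_point (QSTAB N) (vvec m U V)"
proof -
  have mem: "vvec m U V \<in> QSTAB N"
  proof -
    define a where "a = 1 / real (card U)"
    have finU: "finite U" using assms(2) finite_subset by blast
    have a01: "0 \<le> a" "a \<le> 1" using assms(3) unfolding a_def by auto
    have xU1: "(\<Sum>k=1..N. vvec m U V U1 k) = a" using assms(5) by (simp add: vvec_def a_def)
    have xU2: "(\<Sum>k=1..N. vvec m U V U2 k) = 1"
    proof -
      have "(\<Sum>k=1..N. vvec m U V U2 k) = (\<Sum>k\<in>{1..N}\<inter>U. a)"
        unfolding sum.inter_restrict[OF finite_atLeastAtMost] by (rule sum.cong) (auto simp: vvec_def a_def)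
      also have "\<dots> = real (card U) * a" using assms(2) by (simp add: Int_absorb1)
      finally show ?thesis using assms(3) unfolding a_def by simp
    qed
    show ?thesis unfolding QSTAB_def
      using assms(5,6,7) assms(2) a01 xU1 xU2 by (auto simp: vvec_def a_def split: kind.split)
  qed
  show ?thesis unfolding is_extreme_point_def
  proof (intro conjI mem ballI allI impI)
    fix y z and t :: real
    assume y: "y \<in> QSTAB N" and z: "z \<in> QSTAB N"
      and h: "0 < t \<and> t < 1 \<and> vvec m U V = (\<lambda>k j. t * y k j + (1 - t) * z k j)"
    have 1: "y = vvec m U V" using key[OF assms(2,3,5,6,7) y z] h by blast
    have "vvec m U V = (\<lambda>k j. (1-t) * z k j + (1 - (1-t)) * y k j)"
      using h by (auto simp: algebra_simps)
    hence 2: "z = vvec m U V" using key[OF assms(2,3,5,6,7) z y, of "1-t"] h by auto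
    show "y = z" using 1 2 by simp
  qed
qed

end
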